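(* Let $f:\mathbb{R}^m\to\mathbb{R}$ be convex and $L$-smooth, and let $\nabla f_\xi(\cdot)$ satisfy $\mathbb{E}_\xi[\nabla f_\xi(x)]=\nabla f(x)$ and $\mathbb{E}_\xi\|\nabla f_\xi(x)-\nabla f(x)\|^2\le\rho^2$ for all $x$. Let $t\ge1$, $x_0\in\mathbb{R}^m$ fixed, and $x_{s+1}=x_s-\gamma\nabla f_{\xi_s}(x_s)$ for $s=0,\dots,t-1$, with each $\xi_s$ drawn independently of $\xi_0,\dots,\xi_{s-1}$, where $0<\gamma\le\frac1L\min\{1,\frac1{t-1}\}$ (with $\frac{1}{t-1}=+\infty$ when $t=1$). Then $$\mathbb{E}\big[\|x_0-x_t\|^2\big]\le\gamma^2t^2\|\nabla f(x_0)\|^2+\gamma^2t\big(1+2(t-1)(t+1)\gamma L\big)\rho^2.$$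
   Context: $f$ is $L$-smooth means $\nabla f$ is $L$-Lipschitz. *)

theory Defs
  imports "HOL-Analysis.Analysis" "HOL-Probability.Probability"
begin

fun sgd_iter :: "('a::real_vector \<Rightarrow> 'b \<Rightarrow> 'a) \<Rightarrow> real \<Rightarrow> 'a \<Rightarrow> (nat \<Rightarrow> 'b) \<Rightarrow> nat \<Rightarrow> 'a" where
  "sgd_iter G \<gamma> x0 w 0 = x0"
| "sgd_iter G \<gamma> x0 w (Suc s) = sgd_iter G \<gamma> x0 w s - \<gamma> *\<^sub>R G (sgd_iter G \<gamma> x0 w s) (w s)"

end

theory Submission imports Defs begin

lemma line_deriv:
  fixes F :: "'a::euclidean_space \<Rightarrow> real"
  assumes "\<And>x. (F has_derivative (\<lambda>h. D x \<bullet> h)) (at x)"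
  shows "((\<lambda>\<tau>. F (x + \<tau> *\<^sub>R v)) has_real_derivative (D (x + \<tau> *\<^sub>R v) \<bullet> v)) (at \<tau>)"
proof -
  have 1: "((\<lambda>\<tau>. x + \<tau> *\<^sub>R v) has_derivative (\<lambda>h. h *\<^sub>R v)) (at \<tau>)"
    by (auto intro!: derivative_eq_intros)
  have "((\<lambda>\<tau>. F (x + \<tau> *\<^sub>R v)) has_derivative (\<lambda>h. D (x + \<tau> *\<^sub>R v) \<bullet> (h *\<^sub>R v))) (at \<tau>)"
    using has_derivative_compose[OF 1 assms] by (simp add: o_def)
  moreover have "(\<lambda>h. D (x + \<tau> *\<^sub>R v) \<bullet> (h *\<^sub>R v)) = (*) (D (x + \<tau> *\<^sub>R v) \<bullet> v)"
    by (auto simp: fun_eq_iff)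
  ultimately show ?thesis
    by (simp add: has_field_derivative_def)
qed

lemma descent:
  fixes F :: "'a::euclidean_space \<Rightarrow> real"
  assumes der: "\<And>x. (F has_derivative (\<lambda>h. D x \<bullet> h)) (at x)"
    and lip: "\<And>x y. norm (D x - D y) \<le> L * norm (x - y)"
  shows "F y \<le> F x + D x \<bullet> (y - x) + L / 2 * (norm (y - x))\<^sup>2"
proof -
  define v where "v = y - x"
  define \<psi> where "\<psi> \<tau> = F (x + \<tau> *\<^sub>R v) - \<tau> * (D x \<bullet> v) - L / 2 * \<tau>\<^sup>2 * (norm v)\<^sup>2" for \<tau>
  have "\<psi> 1 \<le> \<psi> 0"
  proof (rule DERIV_nonpos_imp_nonincreasing[of 0 1])
    fix \<tau> :: real assume \<tau>: "0 \<le> \<tau>" "\<tau> \<le> 1"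
    have d0: "((\<lambda>\<tau>. \<tau> * (D x \<bullet> v) + L / 2 * \<tau>\<^sup>2 * (norm v)\<^sup>2) has_real_derivative (D x \<bullet> v + L * \<tau> * (norm v)\<^sup>2)) (at \<tau>)"
      by (auto intro!: derivative_eq_intros simp: algebra_simps)
    have d: "(\<psi> has_real_derivative (D (x + \<tau> *\<^sub>R v) \<bullet> v - (D x \<bullet> v + L * \<tau> * (norm v)\<^sup>2))) (at \<tau>)"
      using DERIV_diff[OF line_deriv[OF der, of x v \<tau>] d0] unfolding \<psi>_def by (simp add: diff_diff_eq)
    have "D (x + \<tau> *\<^sub>R v) \<bullet> v - D x \<bullet> v = (D (x + \<tau> *\<^sub>R v) - D x) \<bullet> v"
      by (simp add: inner_diff_left)
    also have "\<dots> \<le> norm (D (x + \<tau> *\<^sub>R v) - D x) * norm v"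
      by (rule norm_cauchy_schwarz)
    also have "\<dots> \<le> L * norm (\<tau> *\<^sub>R v) * norm v"
      using lip[of "x + \<tau> *\<^sub>R v" x] by (simp add: mult_right_mono)
    also have "\<dots> = L * \<tau> * (norm v)\<^sup>2"
      using \<tau> by (simp add: power2_eq_square)
    finally have "D (x + \<tau> *\<^sub>R v) \<bullet> v - (D x \<bullet> v + L * \<tau> * (norm v)\<^sup>2) \<le> 0" by linarith
    with d show "\<exists>y. (\<psi> has_real_derivative y) (at \<tau>) \<and> y \<le> 0" by blast
  qed simp
  then show ?thesis unfolding \<psi>_def v_def by simp
qed

lemma tangent:
  fixes f :: "'a::euclidean_space \<Rightarrow> real"
  assumes convex: "convex_on UNIV f"
    and grad: "\<And>x. (f has_derivative (\<lambda>h. g x \<bullet> h)) (at x)"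
  shows "f x + g x \<bullet> (y - x) \<le> f y"
proof -
  define v where "v = y - x"
  define h where "h \<tau> = f (x + \<tau> *\<^sub>R v)" for \<tau> :: real
  have cv: "convex_on UNIV h"
  proof (rule convex_onI)
    fix u a b :: real assume u: "0 < u" "u < 1"
    have "x + ((1 - u) * a + u * b) *\<^sub>R v = (1 - u) *\<^sub>R (x + a *\<^sub>R v) + u *\<^sub>R (x + b *\<^sub>R v)"
      by (simp add: algebra_simps)
    then show "h ((1 - u) *\<^sub>R a + u *\<^sub>R b) \<le> (1 - u) * h a + u * h b"
      unfolding h_def using convex_onD[OF convex, of u "x + a *\<^sub>R v" "x + b *\<^sub>R v"] u by simp
  qed auto
  have "(h has_real_derivative (g (x + 0 *\<^sub>R v) \<bullet> v)) (at 0)"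
    unfolding h_def by (rule line_deriv[OF grad])
  then have "h 1 - h 0 \<ge> (g x \<bullet> v) * (1 - 0)"
    by (intro convex_on_imp_above_tangent[OF cv]) auto
  then show ?thesis unfolding h_def v_def by simp
qed

lemma cocoercive:
  fixes f :: "'a::euclidean_space \<Rightarrow> real"
  assumes convex: "convex_on UNIV f"
    and grad: "\<And>x. (f has_derivative (\<lambda>h. g x \<bullet> h)) (at x)"
    and smooth: "lipschitz_on L UNIV g"
  shows "(norm (g y - g x))\<^sup>2 \<le> L * ((g y - g x) \<bullet> (y - x))"
proof -
  have L0: "L \<ge> 0" and lip: "\<And>x y. norm (g x - g y) \<le> L * norm (x - y)"
    using smooth by (auto simp: lipschitz_on_def dist_norm)
  show ?thesis
  proof (cases "L = 0")
    case True
    then show ?thesis using lip[of y x] by simp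
  next
    case False
    then have Lp: "L > 0" using L0 by simp
    have key: "f a + g a \<bullet> (b - a) + (norm (g b - g a))\<^sup>2 / (2 * L) \<le> f b" for a b
    proof -
      define \<phi> where "\<phi> z = f z - g a \<bullet> z" for z
      have dphi: "(\<phi> has_derivative (\<lambda>h. (g z - g a) \<bullet> h)) (at z)" for z
        unfolding \<phi>_def using grad[of z]
        by (auto intro!: derivative_eq_intros simp: inner_diff_left)
      have lphi: "norm ((g z - g a) - (g w - g a)) \<le> L * norm (z - w)" for z w
        using lip[of z w] by simp
      define y' where "y' = b - (1 / L) *\<^sub>R (g b - g a)"
      have "\<phi> a \<le> \<phi> y'"
        using tangent[OF convex grad, of a y'] unfolding \<phi>_def by (simp add: inner_diff_right)
      also have "\<phi> y' \<le> \<phi> b + (g b - g a) \<bullet> (y' - b) + L / 2 * (norm (y' - b))\<^sup>2"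
        by (rule descent[OF dphi lphi])
      also have "\<dots> = \<phi> b - (norm (g b - g a))\<^sup>2 / (2 * L)"
      proof -
        have "y' - b = - ((1 / L) *\<^sub>R (g b - g a))" unfolding y'_def by simp
        then have "(g b - g a) \<bullet> (y' - b) = - (norm (g b - g a))\<^sup>2 / L"
          "(norm (y' - b))\<^sup>2 = (norm (g b - g a))\<^sup>2 / L\<^sup>2"
          using Lp by (simp_all add: power2_norm_eq_inner power_divide)
        then show ?thesis using Lp by (simp add: power2_eq_square field_simps)
      qed
      finally show ?thesis unfolding \<phi>_def by (simp add: inner_diff_right)
    qed
    have "(norm (g y - g x))\<^sup>2 / L \<le> (g y - g x) \<bullet> (y - x)"
      using key[of x y] key[of y x] by (simp add: norm_minus_commute inner_diff_left inner_diff_right inner_commute field_simps)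
    then show ?thesis using Lp by (simp add: field_simps)
  qed
qed


lemma gradstep:
  fixes g :: "'a::euclidean_space \<Rightarrow> 'a"
  assumes coco: "\<And>x y. (norm (g y - g x))\<^sup>2 \<le> L * ((g y - g x) \<bullet> (y - x))"
    and L0: "L \<ge> 0" and gpos: "\<gamma> > 0" and step1: "\<gamma> * L \<le> 1"
  shows "(norm (g (x - \<gamma> *\<^sub>R (g x + e))))\<^sup>2 \<le> (norm (g x))\<^sup>2 + \<gamma> * L * (norm e)\<^sup>2"
proof -
  define y where "y = x - \<gamma> *\<^sub>R (g x + e)"
  define \<Delta> where "\<Delta> = g y - g x"
  define c where "c = \<gamma> * L"
  define a where "a = (norm \<Delta>)\<^sup>2"
  define p where "p = \<Delta> \<bullet> g x"
  define q where "q = \<Delta> \<bullet> e"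
  define E where "E = (norm e)\<^sup>2"
  have c0: "c \<ge> 0" "c \<le> 1" using L0 gpos step1 by (auto simp: c_def)
  have a0: "a \<ge> 0" by (simp add: a_def)
  have co: "a \<le> - c * p - c * q"
  proof -
    have yx: "y - x = - (\<gamma> *\<^sub>R (g x + e))" by (simp add: y_def)
    have "a \<le> L * (\<Delta> \<bullet> (y - x))" using coco[where x=x and y=y] unfolding a_def \<Delta>_def .
    also have "\<Delta> \<bullet> (y - x) = - \<gamma> * p - \<gamma> * q" unfolding yx p_def q_def
      by (simp add: inner_add_right algebra_simps)
    finally show ?thesis by (simp add: c_def algebra_simps)
  qed
  have sq: "a + 2 * c * q + c\<^sup>2 * E \<ge> 0"
  proof -
    have "0 \<le> (norm (\<Delta> + c *\<^sub>R e))\<^sup>2" by simp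
    also have "\<dots> = a + 2 * c * q + c\<^sup>2 * E"
      unfolding a_def q_def E_def power2_norm_eq_inner
      by (simp add: inner_add_left inner_add_right inner_commute power2_eq_square algebra_simps)
    finally show ?thesis .
  qed
  have goal: "2 * p + a \<le> c * E"
  proof (cases "c = 0")
    case True
    then have "a = 0" using co a0 by simp
    then have "\<Delta> = 0" by (simp add: a_def)
    then show ?thesis using True by (simp add: p_def a_def E_def)
  next
    case False
    then have cp: "c > 0" using c0 by simp
    have "c * (2 * p + a) \<le> -2 * a - 2 * c * q + c * a" using co by (simp add: algebra_simps)
    also have "\<dots> \<le> - a - 2 * c * q" using c0 a0 mult_left_le_one_le[of a c] by (simp add: algebra_simps)
    also have "\<dots> \<le> c * (c * E)" using sq by (simp add: power2_eq_square algebra_simps)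
    finally show ?thesis using cp by simp
  qed
  have "(norm (g y))\<^sup>2 = (norm (g x))\<^sup>2 + 2 * p + a"
  proof -
    have "g y = g x + \<Delta>" by (simp add: \<Delta>_def)
    then show ?thesis unfolding p_def a_def power2_norm_eq_inner
      by (simp add: inner_add_left inner_add_right inner_commute)
  qed
  then show ?thesis using goal unfolding y_def c_def E_def by simp
qed

lemma onestep:
  fixes g :: "'a::euclidean_space \<Rightarrow> 'a" and G :: "'a \<Rightarrow> 'b \<Rightarrow> 'a"
  assumes coco: "\<And>x y. (norm (g y - g x))\<^sup>2 \<le> L * ((g y - g x) \<bullet> (y - x))"
    and mono: "\<And>x y. (g y - g x) \<bullet> (y - x) \<ge> 0"
    and L0: "L \<ge> 0" and gpos: "\<gamma> > 0" and step1: "\<gamma> * L \<le> 1"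
    and prob: "prob_space M"
    and Gm: "G x \<in> borel_measurable M"
    and unb: "integrable M (G x) \<and> (\<integral>z. G x z \<partial>M) = g x"
    and var: "(\<integral>\<^sup>+ z. ennreal ((norm (G x z - g x))\<^sup>2) \<partial>M) \<le> ennreal (\<rho>\<^sup>2)"
    and k: "k \<ge> 1" and c'0: "c' \<ge> 0"
  shows "(\<integral>\<^sup>+ z. ennreal ((norm (x0 - (x - \<gamma> *\<^sub>R G x z) + (\<gamma> * (k - 1)) *\<^sub>R g x0))\<^sup>2
              + c' * (norm (g (x - \<gamma> *\<^sub>R G x z)))\<^sup>2) \<partial>M) + ennreal (\<gamma>\<^sup>2 * k * (norm (g x0))\<^sup>2)
     \<le> ennreal ((norm (x0 - x + (\<gamma> * k) *\<^sub>R g x0))\<^sup>2 + (c' + \<gamma>\<^sup>2 * k) * (norm (g x))\<^sup>2)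
       + ennreal (\<gamma>\<^sup>2 * \<rho>\<^sup>2 + c' * \<gamma> * L * \<rho>\<^sup>2)"
proof -
  interpret prob_space M by (rule prob)
  define e where "e z = G x z - g x" for z
  define A where "A = x0 - x + (\<gamma> * (k - 1)) *\<^sub>R g x0 + \<gamma> *\<^sub>R g x"
  define B where "B = x0 - x + (\<gamma> * k) *\<^sub>R g x0"
  define H where "H z = (norm A)\<^sup>2 + 2 * \<gamma> * (A \<bullet> e z) + \<gamma>\<^sup>2 * (norm (e z))\<^sup>2
      + c' * ((norm (g x))\<^sup>2 + \<gamma> * L * (norm (e z))\<^sup>2)" for z
  define V where "V = (\<integral>z. (norm (e z))\<^sup>2 \<partial>M)"
  have em: "e \<in> borel_measurable M" unfolding e_def using Gm by measurable
  have ei: "integrable M e" unfolding e_def using unb by auto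
  have e0: "(\<integral>z. e z \<partial>M) = 0" unfolding e_def using unb
    by (simp add: Bochner_Integration.integral_diff prob_space)
  have nni: "(\<integral>\<^sup>+ z. ennreal ((norm (e z))\<^sup>2) \<partial>M) < \<infinity>"
    using var unfolding e_def by (simp add: le_less_trans)
  have e2i: "integrable M (\<lambda>z. (norm (e z))\<^sup>2)"
    by (rule integrableI_nonneg) (use em nni in auto)
  have Vle: "V \<le> \<rho>\<^sup>2"
  proof -
    have "ennreal V = (\<integral>\<^sup>+ z. ennreal ((norm (e z))\<^sup>2) \<partial>M)"
      unfolding V_def by (rule nn_integral_eq_integral[symmetric]) (use e2i in auto)
    also have "\<dots> \<le> ennreal (\<rho>\<^sup>2)" using var unfolding e_def .
    finally show ?thesis by (simp add: ennreal_le_iff)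
  qed
  have V0: "V \<ge> 0" unfolding V_def by simp
  have Hi: "integrable M H" unfolding H_def
    using ei e2i by (intro Bochner_Integration.integrable_add integrable_mult_right integrable_inner_right integrable_const) auto
  have FH: "(norm (x0 - (x - \<gamma> *\<^sub>R G x z) + (\<gamma> * (k - 1)) *\<^sub>R g x0))\<^sup>2
              + c' * (norm (g (x - \<gamma> *\<^sub>R G x z)))\<^sup>2 \<le> H z" for z
  proof -
    have 1: "x0 - (x - \<gamma> *\<^sub>R G x z) + (\<gamma> * (k - 1)) *\<^sub>R g x0 = A + \<gamma> *\<^sub>R e z"
      unfolding A_def e_def by (simp add: algebra_simps)
    have 2: "(norm (A + \<gamma> *\<^sub>R e z))\<^sup>2 = (norm A)\<^sup>2 + 2 * \<gamma> * (A \<bullet> e z) + \<gamma>\<^sup>2 * (norm (e z))\<^sup>2"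
      unfolding power2_norm_eq_inner
      by (simp add: inner_add_left inner_add_right inner_commute power2_eq_square algebra_simps)
    have 3: "G x z = g x + e z" unfolding e_def by simp
    have "(norm (g (x - \<gamma> *\<^sub>R G x z)))\<^sup>2 \<le> (norm (g x))\<^sup>2 + \<gamma> * L * (norm (e z))\<^sup>2"
      unfolding 3 by (rule gradstep[OF coco L0 gpos step1])
    then show ?thesis unfolding 1 2 H_def using c'0 by (simp add: mult_left_mono)
  qed
  have intH: "(\<integral>z. H z \<partial>M) = (norm A)\<^sup>2 + \<gamma>\<^sup>2 * V + c' * ((norm (g x))\<^sup>2 + \<gamma> * L * V)"
    unfolding H_def V_def using ei e2i e0
    by (simp add: Bochner_Integration.integral_add prob_space)
  have Hnn: "0 \<le> H z" for z
    using FH[of z] c'0 by (smt (verit) mult_nonneg_nonneg zero_le_power2)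
  have step_a: "(\<integral>\<^sup>+ z. ennreal ((norm (x0 - (x - \<gamma> *\<^sub>R G x z) + (\<gamma> * (k - 1)) *\<^sub>R g x0))\<^sup>2
              + c' * (norm (g (x - \<gamma> *\<^sub>R G x z)))\<^sup>2) \<partial>M) \<le> ennreal (\<integral>z. H z \<partial>M)"
  proof -
    have "(\<integral>\<^sup>+ z. ennreal ((norm (x0 - (x - \<gamma> *\<^sub>R G x z) + (\<gamma> * (k - 1)) *\<^sub>R g x0))\<^sup>2
              + c' * (norm (g (x - \<gamma> *\<^sub>R G x z)))\<^sup>2) \<partial>M) \<le> (\<integral>\<^sup>+ z. ennreal (H z) \<partial>M)"
      by (intro nn_integral_mono ennreal_leI FH)
    also have "\<dots> = ennreal (\<integral>z. H z \<partial>M)"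
      by (rule nn_integral_eq_integral) (use Hi Hnn in auto)
    finally show ?thesis .
  qed
  have real_ineq: "(norm A)\<^sup>2 + \<gamma>\<^sup>2 * k * (norm (g x0))\<^sup>2 \<le> (norm B)\<^sup>2 + \<gamma>\<^sup>2 * k * (norm (g x))\<^sup>2"
  proof -
    define d where "d = g x - g x0"
    have AB: "A = B + \<gamma> *\<^sub>R d" unfolding A_def B_def d_def by (simp add: algebra_simps)
    have m: "(x0 - x) \<bullet> d \<le> 0" using mono[of x0 x] unfolding d_def
      by (simp add: inner_diff_right inner_diff_left inner_commute algebra_simps)
    have gx: "g x = g x0 + d" unfolding d_def by simp
    have "(norm A)\<^sup>2 = (norm B)\<^sup>2 + 2 * \<gamma> * ((x0 - x) \<bullet> d) + 2 * \<gamma>\<^sup>2 * k * (g x0 \<bullet> d) + \<gamma>\<^sup>2 * (norm d)\<^sup>2"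
      unfolding AB B_def power2_norm_eq_inner
      by (simp add: inner_add_left inner_add_right inner_commute power2_eq_square algebra_simps)
    moreover have "(norm (g x))\<^sup>2 = (norm (g x0))\<^sup>2 + 2 * (g x0 \<bullet> d) + (norm d)\<^sup>2"
      unfolding gx power2_norm_eq_inner
      by (simp add: inner_add_left inner_add_right inner_commute)
    moreover have "\<gamma>\<^sup>2 * (norm d)\<^sup>2 \<le> \<gamma>\<^sup>2 * k * (norm d)\<^sup>2"
    proof -
      have "\<gamma>\<^sup>2 * 1 \<le> \<gamma>\<^sup>2 * k" using k by (intro mult_left_mono) auto
      then show ?thesis by (intro mult_right_mono) auto
    qed
    moreover have "2 * \<gamma> * ((x0 - x) \<bullet> d) \<le> 0" using m gpos by (simp add: mult_nonneg_nonpos)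
    ultimately show ?thesis by (simp add: algebra_simps)
  qed
  have "ennreal (\<integral>z. H z \<partial>M) + ennreal (\<gamma>\<^sup>2 * k * (norm (g x0))\<^sup>2)
        = ennreal ((\<integral>z. H z \<partial>M) + \<gamma>\<^sup>2 * k * (norm (g x0))\<^sup>2)"
    using Hnn k by (intro ennreal_plus[symmetric]) (auto simp: integral_nonneg_AE)
  also have "\<dots> \<le> ennreal (((norm B)\<^sup>2 + (c' + \<gamma>\<^sup>2 * k) * (norm (g x))\<^sup>2) + (\<gamma>\<^sup>2 * \<rho>\<^sup>2 + c' * \<gamma> * L * \<rho>\<^sup>2))"
  proof (rule ennreal_leI)
    have "\<gamma>\<^sup>2 * V \<le> \<gamma>\<^sup>2 * \<rho>\<^sup>2" using Vle by (simp add: mult_left_mono)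
    moreover have "c' * \<gamma> * L * V \<le> c' * \<gamma> * L * \<rho>\<^sup>2" using Vle c'0 gpos L0 by (simp add: mult_left_mono)
    ultimately show "(\<integral>z. H z \<partial>M) + \<gamma>\<^sup>2 * k * (norm (g x0))\<^sup>2
       \<le> ((norm B)\<^sup>2 + (c' + \<gamma>\<^sup>2 * k) * (norm (g x))\<^sup>2) + (\<gamma>\<^sup>2 * \<rho>\<^sup>2 + c' * \<gamma> * L * \<rho>\<^sup>2)"
      unfolding intH using real_ineq by (simp add: algebra_simps)
  qed
  also have "\<dots> = ennreal ((norm B)\<^sup>2 + (c' + \<gamma>\<^sup>2 * k) * (norm (g x))\<^sup>2) + ennreal (\<gamma>\<^sup>2 * \<rho>\<^sup>2 + c' * \<gamma> * L * \<rho>\<^sup>2)"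
    using c'0 gpos L0 k by (intro ennreal_plus) auto
  finally show ?thesis using step_a unfolding B_def
    by (meson add_right_mono order_trans)
qed


lemma sgd_local:
  assumes "\<And>j. j < s \<Longrightarrow> w j = w' j"
  shows "sgd_iter G \<gamma> x0 w s = sgd_iter G \<gamma> x0 w' s"
  using assms by (induction s) auto

lemma sgd_meas:
  fixes G :: "'a::euclidean_space \<Rightarrow> 'b \<Rightarrow> 'a"
  assumes meas: "(\<lambda>(x, z). G x z) \<in> borel_measurable (borel \<Otimes>\<^sub>M M)"
  shows "s \<le> k \<Longrightarrow> (\<lambda>w. sgd_iter G \<gamma> x0 w s) \<in> borel_measurable (PiM {..<k} (\<lambda>_. M))"
proof (induction s)
  case 0
  then show ?case by simp
next
  case (Suc s)
  then have IH: "(\<lambda>w. sgd_iter G \<gamma> x0 w s) \<in> borel_measurable (PiM {..<k} (\<lambda>_. M))" by simp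
  have c: "(\<lambda>w. w s) \<in> measurable (PiM {..<k} (\<lambda>_. M)) M"
    using Suc.prems by (intro measurable_component_singleton) auto
  have "(\<lambda>w. (sgd_iter G \<gamma> x0 w s, w s)) \<in> measurable (PiM {..<k} (\<lambda>_. M)) (borel \<Otimes>\<^sub>M M)"
    using IH c by (rule measurable_Pair)
  from measurable_compose[OF this meas]
  have "(\<lambda>w. G (sgd_iter G \<gamma> x0 w s) (w s)) \<in> borel_measurable (PiM {..<k} (\<lambda>_. M))" by simp
  then show ?case using IH by simp
qed

lemma gauss_sum: "(\<Sum>j<n. (real n - real j)) = real n * (real n + 1) / 2"
proof (induction n)
  case 0
  then show ?case by simp
next
  case (Suc n)
  have "(\<Sum>j<Suc n. (real (Suc n) - real j)) = (\<Sum>j<n. (real n - real j + 1)) + 1"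
    by (simp add: algebra_simps)
  also have "\<dots> = (\<Sum>j<n. (real n - real j)) + real n + 1"
    by (simp add: sum.distrib)
  also have "\<dots> = real (Suc n) * (real (Suc n) + 1) / 2"
    using Suc by (simp add: field_simps)
  finally show ?case .
qed

theorem lemma9:
  fixes f :: "'a::euclidean_space \<Rightarrow> real"
    and g :: "'a \<Rightarrow> 'a"
    and G :: "'a \<Rightarrow> 'b \<Rightarrow> 'a"
    and M :: "'b measure"
    and L \<rho> \<gamma> :: real and t :: nat and x0 :: 'a
  assumes convex: "convex_on UNIV f"
    and grad: "\<And>x. (f has_derivative (\<lambda>h. g x \<bullet> h)) (at x)"
    and smooth: "lipschitz_on L UNIV g"
    and prob: "prob_space M"
    and meas: "(\<lambda>(x, z). G x z) \<in> borel_measurable (borel \<Otimes>\<^sub>M M)"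
    and unbiased: "\<And>x. integrable M (G x) \<and> (\<integral>z. G x z \<partial>M) = g x"
    and variance: "\<And>x. (\<integral>\<^sup>+ z. ennreal ((norm (G x z - g x))\<^sup>2) \<partial>M) \<le> ennreal (\<rho>\<^sup>2)"
    and t: "t \<ge> 1"
    and gpos: "\<gamma> > 0"
    and step1: "\<gamma> * L \<le> 1"
    and step2: "\<gamma> * L * (real t - 1) \<le> 1"
  shows "(\<integral>\<^sup>+ w. ennreal ((norm (x0 - sgd_iter G \<gamma> x0 w t))\<^sup>2) \<partial>(PiM {..<t} (\<lambda>_. M)))
          \<le> ennreal (\<gamma>\<^sup>2 * (real t)\<^sup>2 * (norm (g x0))\<^sup>2
                    + \<gamma>\<^sup>2 * real t * (1 + 2 * (real t - 1) * (real t + 1) * \<gamma> * L) * \<rho>\<^sup>2)"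
proof -
  interpret prob_space M by (rule prob)
  interpret PS: product_sigma_finite "\<lambda>_. M"
    by unfold_locales
  have L0: "L \<ge> 0" and lip: "\<And>x y. norm (g x - g y) \<le> L * norm (x - y)"
    using smooth by (auto simp: lipschitz_on_def dist_norm)
  have coco: "\<And>x y. (norm (g y - g x))\<^sup>2 \<le> L * ((g y - g x) \<bullet> (y - x))"
    by (rule cocoercive[OF convex grad smooth])
  have mono: "\<And>x y. (g y - g x) \<bullet> (y - x) \<ge> 0"
  proof -
    fix x y
    have "f x + g x \<bullet> (y - x) \<le> f y" "f y + g y \<bullet> (x - y) \<le> f x"
      using tangent[OF convex grad] by auto
    then show "(g y - g x) \<bullet> (y - x) \<ge> 0"
      by (simp add: inner_diff_left inner_diff_right inner_commute algebra_simps)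
  qed
  have gcont: "continuous_on UNIV g" by (rule lipschitz_on_continuous_on[OF smooth])
  have gm[measurable]: "g \<in> borel_measurable borel" by (rule borel_measurable_continuous_onI[OF gcont])
  have Gm: "G x \<in> borel_measurable M" for x
    using measurable_compose[OF measurable_Pair1'[of x borel M] meas] by simp
  define n where "n = t"
  define P where "P k = PiM {..<k::nat} (\<lambda>_. M)" for k
  define X where "X s w = sgd_iter G \<gamma> x0 w s" for s w
  define cc where "cc s = \<gamma>\<^sup>2 * (real n - real s) * (real n - real s + 1) / 2" for s
  define V where "V s w = (norm (x0 - X s w + (\<gamma> * (real n - real s)) *\<^sub>R g x0))\<^sup>2 + cc s * (norm (g (X s w)))\<^sup>2" for s w
  define K where "K s = \<gamma>\<^sup>2 * \<rho>\<^sup>2 + cc (Suc s) * \<gamma> * L * \<rho>\<^sup>2" for s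
  define A where "A s = (\<Sum>j<s. \<gamma>\<^sup>2 * (real n - real j) * (norm (g x0))\<^sup>2)" for s
  define Bc where "Bc s = (\<Sum>j<s. K j)" for s
  define V0 where "V0 = V 0 (\<lambda>_. undefined)"
  have probP: "prob_space (P k)" for k unfolding P_def by (intro prob_space_PiM prob)
  have Xm: "s \<le> k \<Longrightarrow> X s \<in> borel_measurable (P k)" for s k
    unfolding X_def P_def by (rule sgd_meas[OF meas])
  have ccn: "cc s \<ge> 0" if "s \<le> n" for s using that unfolding cc_def by simp
  have Kn: "K s \<ge> 0" if "s < n" for s using that ccn[of "Suc s"] L0 gpos unfolding K_def by simp
  have Vn: "V s w \<ge> 0" if "s \<le> n" for s w using ccn[OF that] unfolding V_def by simp
  have An: "A s \<ge> 0" if "s \<le> n" for s unfolding A_def using that by (intro sum_nonneg) auto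
  have chain: "s \<le> n \<Longrightarrow> (\<integral>\<^sup>+ w. ennreal (V s w) \<partial>P s) + ennreal (A s) \<le> ennreal (V0 + Bc s)" for s
  proof (induction s)
    case 0
    have "V 0 w = V0" for w by (simp add: V0_def V_def X_def)
    then have "(\<integral>\<^sup>+ w. ennreal (V 0 w) \<partial>P 0) = ennreal V0"
      using prob_space.emeasure_space_1[OF probP[of 0]] by simp
    then show ?case by (simp add: A_def Bc_def)
  next
    case (Suc s)
    define k where "k = real n - real s"
    have k1: "k \<ge> 1" using Suc.prems unfolding k_def by simp
    have sn: "s < n" using Suc.prems by simp
    have IH: "(\<integral>\<^sup>+ w. ennreal (V s w) \<partial>P s) + ennreal (A s) \<le> ennreal (V0 + Bc s)"
      using Suc by simp
    define F where "F x z = (norm (x0 - (x - \<gamma> *\<^sub>R G x z) + (\<gamma> * (k - 1)) *\<^sub>R g x0))\<^sup>2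
              + cc (Suc s) * (norm (g (x - \<gamma> *\<^sub>R G x z)))\<^sup>2" for x z
    define \<Phi> where "\<Phi> x = (\<integral>\<^sup>+ z. ennreal (F x z) \<partial>M)" for x
    have [measurable]: "X (Suc s) \<in> borel_measurable (P (Suc s))" by (rule Xm) simp
    have [measurable]: "X s \<in> borel_measurable (P s)" by (rule Xm) simp
    have Vm: "(\<lambda>w. ennreal (V (Suc s) w)) \<in> borel_measurable (PiM (insert s {..<s}) (\<lambda>_. M))"
    proof -
      have "(\<lambda>w. ennreal (V (Suc s) w)) \<in> borel_measurable (P (Suc s))" unfolding V_def by measurable
      then show ?thesis by (simp add: P_def lessThan_Suc)
    qed
    have Fm: "(\<lambda>(x, z). ennreal (F x z)) \<in> borel_measurable (borel \<Otimes>\<^sub>M M)"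
      unfolding F_def using meas by measurable
    have \<Phi>m: "\<Phi> \<in> borel_measurable borel"
      unfolding \<Phi>_def using borel_measurable_nn_integral[OF Fm] by simp
    have I1: "(\<integral>\<^sup>+ w. ennreal (V (Suc s) w) \<partial>P (Suc s)) = (\<integral>\<^sup>+ w. \<Phi> (X s w) \<partial>P s)"
    proof -
      have "(\<integral>\<^sup>+ w. ennreal (V (Suc s) w) \<partial>P (Suc s))
          = (\<integral>\<^sup>+ w. (\<integral>\<^sup>+ z. ennreal (V (Suc s) (w(s := z))) \<partial>M) \<partial>P s)"
        unfolding P_def lessThan_Suc by (rule PS.product_nn_integral_insert[OF _ _ Vm]) auto
      also have "\<dots> = (\<integral>\<^sup>+ w. \<Phi> (X s w) \<partial>P s)"
      proof (rule nn_integral_cong)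
        fix w
        have "V (Suc s) (w(s := z)) = F (X s w) z" for z
        proof -
          have loc: "X s (w(s := z)) = X s w" unfolding X_def by (rule sgd_local) simp
          have e1: "X (Suc s) (w(s := z)) = X s w - \<gamma> *\<^sub>R G (X s w) z"
            using loc unfolding X_def by simp
          have e2: "\<gamma> * (real n - real (Suc s)) = \<gamma> * (k - 1)" unfolding k_def by simp
          show ?thesis unfolding V_def e1 e2 F_def by (rule refl)
        qed
        then show "(\<integral>\<^sup>+ z. ennreal (V (Suc s) (w(s := z))) \<partial>M) = \<Phi> (X s w)"
          unfolding \<Phi>_def by simp
      qed
      finally show ?thesis .
    qed
    have ccs: "cc (Suc s) + \<gamma>\<^sup>2 * k = cc s" unfolding cc_def k_def by (simp add: field_simps)
    have pw: "\<Phi> (X s w) + ennreal (\<gamma>\<^sup>2 * k * (norm (g x0))\<^sup>2) \<le> ennreal (V s w) + ennreal (K s)" for w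
    proof -
      have "\<Phi> (X s w) + ennreal (\<gamma>\<^sup>2 * k * (norm (g x0))\<^sup>2)
         \<le> ennreal ((norm (x0 - X s w + (\<gamma> * k) *\<^sub>R g x0))\<^sup>2 + (cc (Suc s) + \<gamma>\<^sup>2 * k) * (norm (g (X s w)))\<^sup>2)
           + ennreal (\<gamma>\<^sup>2 * \<rho>\<^sup>2 + cc (Suc s) * \<gamma> * L * \<rho>\<^sup>2)"
        unfolding \<Phi>_def F_def
        by (rule onestep[OF coco mono L0 gpos step1 prob Gm unbiased variance k1 ccn]) (use Suc.prems in simp)
      then show ?thesis unfolding V_def K_def k_def ccs[unfolded k_def] .
    qed
    have "(\<integral>\<^sup>+ w. ennreal (V (Suc s) w) \<partial>P (Suc s)) + ennreal (\<gamma>\<^sup>2 * k * (norm (g x0))\<^sup>2)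
        = (\<integral>\<^sup>+ w. (\<Phi> (X s w) + ennreal (\<gamma>\<^sup>2 * k * (norm (g x0))\<^sup>2)) \<partial>P s)"
      unfolding I1 using prob_space.emeasure_space_1[OF probP[of s]] \<Phi>m
      by (subst nn_integral_add) auto
    also have "\<dots> \<le> (\<integral>\<^sup>+ w. (ennreal (V s w) + ennreal (K s)) \<partial>P s)"
      by (intro nn_integral_mono pw)
    also have "\<dots> = (\<integral>\<^sup>+ w. ennreal (V s w) \<partial>P s) + ennreal (K s)"
      using prob_space.emeasure_space_1[OF probP[of s]]
      by (subst nn_integral_add) (auto simp: V_def)
    finally have st: "(\<integral>\<^sup>+ w. ennreal (V (Suc s) w) \<partial>P (Suc s)) + ennreal (\<gamma>\<^sup>2 * k * (norm (g x0))\<^sup>2)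
       \<le> (\<integral>\<^sup>+ w. ennreal (V s w) \<partial>P s) + ennreal (K s)" .
    have Aeq: "ennreal (A (Suc s)) = ennreal (A s) + ennreal (\<gamma>\<^sup>2 * k * (norm (g x0))\<^sup>2)"
      unfolding A_def k_def using Suc.prems
      by (subst ennreal_plus[symmetric]) (auto intro!: sum_nonneg)
    have Beq: "ennreal (V0 + Bc (Suc s)) = ennreal (V0 + Bc s) + ennreal (K s)"
    proof -
      have "V0 + Bc s \<ge> 0" unfolding V0_def Bc_def using Vn[of 0] Kn sn
        by (intro add_nonneg_nonneg sum_nonneg) auto
      then show ?thesis unfolding Bc_def using Kn[OF sn]
        by (simp add: ennreal_plus[symmetric] add.assoc)
    qed
    have "(\<integral>\<^sup>+ w. ennreal (V (Suc s) w) \<partial>P (Suc s)) + ennreal (A (Suc s))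
        = ((\<integral>\<^sup>+ w. ennreal (V (Suc s) w) \<partial>P (Suc s)) + ennreal (\<gamma>\<^sup>2 * k * (norm (g x0))\<^sup>2)) + ennreal (A s)"
      unfolding Aeq by (simp add: ac_simps)
    also have "\<dots> \<le> ((\<integral>\<^sup>+ w. ennreal (V s w) \<partial>P s) + ennreal (K s)) + ennreal (A s)"
      by (rule add_right_mono[OF st])
    also have "\<dots> = ((\<integral>\<^sup>+ w. ennreal (V s w) \<partial>P s) + ennreal (A s)) + ennreal (K s)"
      by (simp add: ac_simps)
    also have "\<dots> \<le> ennreal (V0 + Bc s) + ennreal (K s)"
      by (rule add_right_mono[OF IH])
    finally show ?case unfolding Beq .
  qed
  have fin: "(\<integral>\<^sup>+ w. ennreal (V n w) \<partial>P n) + ennreal (A n) \<le> ennreal (V0 + Bc n)"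
    by (rule chain) simp
  have lhs: "(\<integral>\<^sup>+ w. ennreal (V n w) \<partial>P n)
      = (\<integral>\<^sup>+ w. ennreal ((norm (x0 - sgd_iter G \<gamma> x0 w t))\<^sup>2) \<partial>(PiM {..<t} (\<lambda>_. M)))"
    unfolding V_def cc_def P_def X_def n_def by simp
  define G2 where "G2 = (norm (g x0))\<^sup>2"
  have V0eq: "V0 = \<gamma>\<^sup>2 * (real n)\<^sup>2 * G2 + A n"
  proof -
    have "A n = \<gamma>\<^sup>2 * G2 * (\<Sum>j<n. (real n - real j))"
      unfolding A_def G2_def by (simp add: sum_distrib_left sum_distrib_right algebra_simps)
    also have "\<dots> = cc 0 * G2" unfolding gauss_sum cc_def by simp
    finally have "A n = cc 0 * G2" .
    moreover have "(norm ((\<gamma> * real n) *\<^sub>R g x0))\<^sup>2 = \<gamma>\<^sup>2 * (real n)\<^sup>2 * G2"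
      unfolding G2_def by (simp add: power_mult_distrib abs_mult)
    ultimately show ?thesis unfolding V0_def V_def X_def G2_def by simp
  qed
  have Bcle: "Bc n \<le> \<gamma>\<^sup>2 * real n * (1 + 2 * (real n - 1) * (real n + 1) * \<gamma> * L) * \<rho>\<^sup>2"
  proof -
    have ccb: "cc (Suc j) \<le> \<gamma>\<^sup>2 * ((real n - 1) * real n / 2)" if "j < n" for j
    proof -
      have a: "0 \<le> real n - real (Suc j)" "real n - real (Suc j) \<le> real n - 1"
        "real n - real (Suc j) + 1 \<le> real n" using that by auto
      have "(real n - real (Suc j)) * (real n - real (Suc j) + 1) \<le> (real n - 1) * real n"
        using a by (intro mult_mono) auto
      then have "\<gamma>\<^sup>2 * ((real n - real (Suc j)) * (real n - real (Suc j) + 1)) \<le> \<gamma>\<^sup>2 * ((real n - 1) * real n)"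
        by (intro mult_left_mono) auto
      then have "\<gamma>\<^sup>2 * ((real n - real (Suc j)) * (real n - real (Suc j) + 1)) / 2 \<le> \<gamma>\<^sup>2 * ((real n - 1) * real n) / 2"
        by (rule divide_right_mono) simp
      moreover have "cc (Suc j) = \<gamma>\<^sup>2 * ((real n - real (Suc j)) * (real n - real (Suc j) + 1)) / 2"
        unfolding cc_def by (simp only: mult.assoc)
      ultimately show ?thesis by simp
    qed
    have "Bc n \<le> real (card {..<n}) * (\<gamma>\<^sup>2 * \<rho>\<^sup>2 + \<gamma>\<^sup>2 * ((real n - 1) * real n / 2) * \<gamma> * L * \<rho>\<^sup>2)"
      unfolding Bc_def
    proof (rule sum_bounded_above)
      fix j assume "j \<in> {..<n}"
      then have "cc (Suc j) * (\<gamma> * L * \<rho>\<^sup>2) \<le> \<gamma>\<^sup>2 * ((real n - 1) * real n / 2) * (\<gamma> * L * \<rho>\<^sup>2)"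
        using ccb[of j] gpos L0 by (intro mult_right_mono) auto
      then show "K j \<le> \<gamma>\<^sup>2 * \<rho>\<^sup>2 + \<gamma>\<^sup>2 * ((real n - 1) * real n / 2) * \<gamma> * L * \<rho>\<^sup>2"
        unfolding K_def by (simp add: mult.assoc)
    qed
    also have "\<dots> = \<gamma>\<^sup>2 * real n * (1 + (real n - 1) * real n / 2 * \<gamma> * L) * \<rho>\<^sup>2"
      by (simp add: algebra_simps)
    also have "\<dots> \<le> \<gamma>\<^sup>2 * real n * (1 + 2 * (real n - 1) * (real n + 1) * \<gamma> * L) * \<rho>\<^sup>2"
    proof -
      have n1: "real n \<ge> 1" using t n_def by simp
      have "(real n - 1) * (real n / 2) \<le> (real n - 1) * (2 * (real n + 1))"
        using n1 by (intro mult_left_mono) auto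
      then have "(real n - 1) * real n / 2 \<le> 2 * (real n - 1) * (real n + 1)"
        by (simp add: algebra_simps)
      then have "(real n - 1) * real n / 2 * (\<gamma> * L) \<le> 2 * (real n - 1) * (real n + 1) * (\<gamma> * L)"
        using gpos L0 by (intro mult_right_mono) auto
      then have "1 + (real n - 1) * real n / 2 * \<gamma> * L \<le> 1 + 2 * (real n - 1) * (real n + 1) * \<gamma> * L"
        by (simp add: mult.assoc)
      then show ?thesis using n1 gpos
        by (intro mult_right_mono mult_left_mono) auto
    qed
    finally show ?thesis .
  qed
  have An0: "A n \<ge> 0" by (rule An) simp
  have Bn0: "Bc n \<ge> 0" unfolding Bc_def using Kn by (intro sum_nonneg) auto
  have "ennreal (V0 + Bc n) = ennreal (A n) + ennreal (\<gamma>\<^sup>2 * (real n)\<^sup>2 * G2 + Bc n)"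
    unfolding V0eq using An0 Bn0 by (subst ennreal_plus[symmetric]) (auto simp: G2_def ac_simps)
  with fin have "ennreal (A n) + (\<integral>\<^sup>+ w. ennreal (V n w) \<partial>P n) \<le> ennreal (A n) + ennreal (\<gamma>\<^sup>2 * (real n)\<^sup>2 * G2 + Bc n)"
    by (simp add: ac_simps)
  then have "(\<integral>\<^sup>+ w. ennreal (V n w) \<partial>P n) \<le> ennreal (\<gamma>\<^sup>2 * (real n)\<^sup>2 * G2 + Bc n)"
    by (simp add: ennreal_add_left_cancel_le)
  also have "\<dots> \<le> ennreal (\<gamma>\<^sup>2 * (real t)\<^sup>2 * (norm (g x0))\<^sup>2
                    + \<gamma>\<^sup>2 * real t * (1 + 2 * (real t - 1) * (real t + 1) * \<gamma> * L) * \<rho>\<^sup>2)"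
    using Bcle unfolding G2_def n_def by (intro ennreal_leI) simp
  finally show ?thesis unfolding lhs .
qed

end
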